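(* Let $\mathcal G=(V_{\min},V_{\max},E,w,\lambda)$ be a discounted payoff game, $\sigma$ a joint strategy, and $\nu$ a basis valuation of $H$ minimising $f_\sigma$ over all solutions of $H$. Assume there are no local improvements of $\sigma$ for $\nu$, i.e. $\mathsf{offset}(\nu,(v,v'))\ge\mathsf{offset}(\nu,(v,\sigma(v)))$ for all $(v,v')\in E$. Let $E'$ be any set of edges with $E_\nu\subseteq E'\subseteq S^\sigma_\nu$ that contains an outgoing edge of every vertex. If $\nu$ does not define strategies for both players, then there is a joint strategy $\sigma'$ that is better than $\sigma$ and satisfies $(v,\sigma'(v))\in E'$ for all $v\in V$.
   Context: A discounted payoff game is a tuple $\mathcal G=(V_{\min},V_{\max},E,w,\lambda)$ with $V=V_{\min}\cup V_{\max}$ finite (disjoint union of Min and Max vertices), $E\subseteq V\times V$ with every vertex having an outgoing edge, $w:E\to\mathbb R$, $\lambda:E\to[0,1)$. A joint strategy is a map $\sigma:V\to V$ with $(v,\sigma(v))\in E$ for all $v$. $H$ is the system of inequations over $x\in\mathbb R^V$ containing, for each edge $e=(v,v')$, the inequation $I_e$: $x(v)\ge w_e+\lambda_e x(v')$ if $v\in V_{\max}$ and $x(v)\le w_e+\lambda_e x(v')$ if $v\in V_{\min}$. A basis of $H$ is a set of $|V|$ inequations of $H$ whose equality versions have a unique common solution; if that solution satisfies $H$ it is the basis valuation. $\mathsf{offset}(x,(v,v'))=x(v)-(w_{(v,v')}+\lambda_{(v,v')}x(v'))$ if $v\in V_{\max}$, and $(w_{(v,v')}+\lambda_{(v,v')}x(v'))-x(v)$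 otherwise; $f_\sigma(x)=\sum_{v\in V}\mathsf{offset}(x,(v,\sigma(v)))$. $S^\sigma_\nu=\{(v,v')\in E\mid \mathsf{offset}(\nu,(v,v'))=\mathsf{offset}(\nu,(v,\sigma(v)))\}$ (stale edges) and $E_\nu=\{(v,v')\in E\mid\mathsf{offset}(\nu,(v,v'))=0\}$. A valuation $x$ defines strategies for both players if every vertex $v$ has an outgoing edge $e$ with $I_e$ holding with equality at $x$. A joint strategy $\sigma'$ is better than $\sigma$ iff $\min\{f_{\sigma'}(x)\mid x \text{ solves } H\}<\min\{f_{\sigma}(x)\mid x\text{ solves } H\}$. *)

theory Defs
  imports Complex_Main
begin

type_synonym 'v edge = "'v \<times> 'v"

text \<open>A discounted payoff game with finite vertex type 'v (V = UNIV), partitioned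
  into Min vertices Vmin and Max vertices Vmax, edges E, weights w and discounts lam.\<close>
definition dpg :: "'v::finite set \<Rightarrow> 'v set \<Rightarrow> 'v edge set \<Rightarrow> ('v edge \<Rightarrow> real) \<Rightarrow> bool" where
  "dpg Vmin Vmax E lam \<longleftrightarrow>
     Vmin \<inter> Vmax = {} \<and> Vmin \<union> Vmax = UNIV \<and>
     (\<forall>v. \<exists>v'. (v, v') \<in> E) \<and>
     (\<forall>e\<in>E. 0 \<le> lam e \<and> lam e < 1)"

definition ineq :: "'v set \<Rightarrow> ('v edge \<Rightarrow> real) \<Rightarrow> ('v edge \<Rightarrow> real) \<Rightarrow> 'v edge \<Rightarrow> ('v \<Rightarrow> real) \<Rightarrow> bool" where
  "ineq Vmax w lam e x \<longleftrightarrow>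
     (if fst e \<in> Vmax then x (fst e) \<ge> w e + lam e * x (snd e)
      else x (fst e) \<le> w e + lam e * x (snd e))"

definition ineq_eq :: "('v edge \<Rightarrow> real) \<Rightarrow> ('v edge \<Rightarrow> real) \<Rightarrow> 'v edge \<Rightarrow> ('v \<Rightarrow> real) \<Rightarrow> bool" where
  "ineq_eq w lam e x \<longleftrightarrow> x (fst e) = w e + lam e * x (snd e)"

definition solves_H :: "'v set \<Rightarrow> 'v edge set \<Rightarrow> ('v edge \<Rightarrow> real) \<Rightarrow> ('v edge \<Rightarrow> real) \<Rightarrow> ('v \<Rightarrow> real) \<Rightarrow> bool" where
  "solves_H Vmax E w lam x \<longleftrightarrow> (\<forall>e\<in>E. ineq Vmax w lam e x)"

definition is_basis :: "'v::finite edge set \<Rightarrow> ('v edge \<Rightarrow> real) \<Rightarrow> ('v edge \<Rightarrow> real) \<Rightarrow> 'v edge set \<Rightarrow> bool" where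
  "is_basis E w lam B \<longleftrightarrow> B \<subseteq> E \<and> card B = card (UNIV :: 'v set) \<and>
     (\<exists>!x. \<forall>e\<in>B. ineq_eq w lam e x)"

definition basis_valuation :: "'v::finite set \<Rightarrow> 'v edge set \<Rightarrow> ('v edge \<Rightarrow> real) \<Rightarrow> ('v edge \<Rightarrow> real) \<Rightarrow> ('v \<Rightarrow> real) \<Rightarrow> bool" where
  "basis_valuation Vmax E w lam x \<longleftrightarrow>
     (\<exists>B. is_basis E w lam B \<and> (\<forall>e\<in>B. ineq_eq w lam e x)) \<and> solves_H Vmax E w lam x"

definition offset :: "'v set \<Rightarrow> ('v edge \<Rightarrow> real) \<Rightarrow> ('v edge \<Rightarrow> real) \<Rightarrow> ('v \<Rightarrow> real) \<Rightarrow> 'v edge \<Rightarrow> real" where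
  "offset Vmax w lam x e =
     (if fst e \<in> Vmax then x (fst e) - (w e + lam e * x (snd e))
      else (w e + lam e * x (snd e)) - x (fst e))"

definition joint_strategy :: "'v edge set \<Rightarrow> ('v \<Rightarrow> 'v) \<Rightarrow> bool" where
  "joint_strategy E \<sigma> \<longleftrightarrow> (\<forall>v. (v, \<sigma> v) \<in> E)"

definition f_strat :: "'v::finite set \<Rightarrow> ('v edge \<Rightarrow> real) \<Rightarrow> ('v edge \<Rightarrow> real) \<Rightarrow> ('v \<Rightarrow> 'v) \<Rightarrow> ('v \<Rightarrow> real) \<Rightarrow> real" where
  "f_strat Vmax w lam \<sigma> x = (\<Sum>v\<in>UNIV. offset Vmax w lam x (v, \<sigma> v))"

definition stale :: "'v set \<Rightarrow> 'v edge set \<Rightarrow> ('v edge \<Rightarrow> real) \<Rightarrow> ('v edge \<Rightarrow> real) \<Rightarrow> ('v \<Rightarrow> 'v) \<Rightarrow> ('v \<Rightarrow> real) \<Rightarrow> 'v edge set" where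
  "stale Vmax E w lam \<sigma> \<nu> =
     {(v, v'). (v, v') \<in> E \<and> offset Vmax w lam \<nu> (v, v') = offset Vmax w lam \<nu> (v, \<sigma> v)}"

definition tight :: "'v set \<Rightarrow> 'v edge set \<Rightarrow> ('v edge \<Rightarrow> real) \<Rightarrow> ('v edge \<Rightarrow> real) \<Rightarrow> ('v \<Rightarrow> real) \<Rightarrow> 'v edge set" where
  "tight Vmax E w lam \<nu> = {e \<in> E. offset Vmax w lam \<nu> e = 0}"

definition defines_strategies :: "'v edge set \<Rightarrow> ('v edge \<Rightarrow> real) \<Rightarrow> ('v edge \<Rightarrow> real) \<Rightarrow> ('v \<Rightarrow> real) \<Rightarrow> bool" where
  "defines_strategies E w lam x \<longleftrightarrow> (\<forall>v. \<exists>v'. (v, v') \<in> E \<and> ineq_eq w lam (v, v') x)"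

text \<open>sigma' is better than sigma: the minimum of f over solutions of H is smaller.
  (The minimum is taken as an infimum; it is attained whenever H is solvable.)\<close>
definition better :: "'v::finite set \<Rightarrow> 'v edge set \<Rightarrow> ('v edge \<Rightarrow> real) \<Rightarrow> ('v edge \<Rightarrow> real) \<Rightarrow> ('v \<Rightarrow> 'v) \<Rightarrow> ('v \<Rightarrow> 'v) \<Rightarrow> bool" where
  "better Vmax E w lam \<sigma>' \<sigma> \<longleftrightarrow>
     (INF x\<in>{x. solves_H Vmax E w lam x}. f_strat Vmax w lam \<sigma>' x)
       < (INF x\<in>{x. solves_H Vmax E w lam x}. f_strat Vmax w lam \<sigma> x)"

end

theory Submission
  imports Defs
begin

lemma fixpoint_box:
  fixes G :: "('a \<Rightarrow> real) \<Rightarrow> 'a \<Rightarrow> real"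
  assumes mono: "\<And>d d' u. (\<And>v. d v \<le> d' v) \<Longrightarrow> G d u \<le> G d' u"
    and box: "\<And>d u. (\<And>v. -1 \<le> d v \<and> d v \<le> 1) \<Longrightarrow> -1 \<le> G d u \<and> G d u \<le> 1"
  shows "\<exists>d. (\<forall>v. -1 \<le> d v \<and> d v \<le> 1) \<and> G d = d"
proof -
  define S where "S = {d. (\<forall>v. -1 \<le> d v \<and> d v \<le> 1) \<and> (\<forall>v. d v \<le> G d v)}"
  define m where "m v = Sup ((\<lambda>d. d v) ` S)" for v
  have m1: "(\<lambda>v. -1) \<in> S" unfolding S_def using box[of "\<lambda>v. -1"] by simp
  have ne: "\<And>v. (\<lambda>d. d v) ` S \<noteq> {}" using m1 by auto
  have bdd: "\<And>v. bdd_above ((\<lambda>d. d v) ` S)" unfolding S_def bdd_above_def by auto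
  have upper: "\<And>d v. d \<in> S \<Longrightarrow> d v \<le> m v" unfolding m_def using bdd by (auto intro: cSup_upper)
  have mbox: "-1 \<le> m v \<and> m v \<le> 1" for v
  proof
    show "-1 \<le> m v" using upper[OF m1] by simp
    show "m v \<le> 1" unfolding m_def using ne by (rule cSup_least) (auto simp: S_def)
  qed
  have mpost: "m v \<le> G m v" for v
    unfolding m_def
  proof (rule cSup_least[OF ne])
    fix x assume "x \<in> (\<lambda>d. d v) ` S"
    then obtain d where d: "d \<in> S" "x = d v" by auto
    have "d v \<le> G d v" using d(1) unfolding S_def by auto
    also have "G d v \<le> G m v" using mono upper[OF d(1)] by blast
    finally show "x \<le> G (\<lambda>v. Sup ((\<lambda>d. d v) ` S)) v" using d(2) unfolding m_def by simp
  qed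
  have gb: "-1 \<le> G m v \<and> G m v \<le> 1" for v using box[of m v] mbox by blast
  have gp: "G m v \<le> G (G m) v" for v using mono[of m "G m" v] mpost by blast
  have "G m \<in> S" unfolding S_def using gb gp by blast
  hence "\<And>v. G m v \<le> m v" by (rule upper)
  hence "G m = m" using mpost by (intro ext antisym) auto
  thus ?thesis using mbox by blast
qed

theorem lemma4p3:
  fixes Vmin Vmax :: "'v::finite set" and E :: "'v edge set"
    and w lam :: "'v edge \<Rightarrow> real" and \<sigma> :: "'v \<Rightarrow> 'v" and \<nu> :: "'v \<Rightarrow> real"
    and E' :: "'v edge set"
  assumes game: "dpg Vmin Vmax E lam"
    and strat: "joint_strategy E \<sigma>"
    and basis: "basis_valuation Vmax E w lam \<nu>"
    and minimal: "\<And>x. solves_H Vmax E w lam x \<Longrightarrow> f_strat Vmax w lam \<sigma> \<nu> \<le> f_strat Vmax w lam \<sigma> x"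
    and no_local: "\<And>v v'. (v, v') \<in> E \<Longrightarrow>
                      offset Vmax w lam \<nu> (v, v') \<ge> offset Vmax w lam \<nu> (v, \<sigma> v)"
    and E'_lower: "tight Vmax E w lam \<nu> \<subseteq> E'"
    and E'_upper: "E' \<subseteq> stale Vmax E w lam \<sigma> \<nu>"
    and E'_out: "\<And>v. \<exists>v'. (v, v') \<in> E'"
    and not_def: "\<not> defines_strategies E w lam \<nu>"
  shows "\<exists>\<sigma>'. joint_strategy E \<sigma>' \<and> better Vmax E w lam \<sigma>' \<sigma> \<and> (\<forall>v. (v, \<sigma>' v) \<in> E')"
proof -
  have lamE: "\<And>e. e \<in> E \<Longrightarrow> 0 \<le> lam e \<and> lam e < 1" using game unfolding dpg_def by blast
  have ineq_off: "\<And>x e. ineq Vmax w lam e x \<longleftrightarrow> offset Vmax w lam x e \<ge> 0"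
    unfolding ineq_def offset_def by auto
  have solvesoff: "\<And>x e. solves_H Vmax E w lam x \<Longrightarrow> e \<in> E \<Longrightarrow> offset Vmax w lam x e \<ge> 0"
    unfolding solves_H_def using ineq_off by blast
  have nusol: "solves_H Vmax E w lam \<nu>" using basis unfolding basis_valuation_def by blast
  have E'E: "E' \<subseteq> E" using E'_upper unfolding stale_def by auto
  have tight_iff: "\<And>e. e \<in> tight Vmax E w lam \<nu> \<longleftrightarrow> e \<in> E \<and> ineq_eq w lam e \<nu>"
    unfolding tight_def offset_def ineq_eq_def by auto
  obtain v0 where v0: "\<And>v'. (v0, v') \<notin> tight Vmax E w lam \<nu>"
    using not_def tight_iff unfolding defines_strategies_def by blast
  define ts where "ts u = {v'. (u, v') \<in> tight Vmax E w lam \<nu>}" for u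
  define G where "G d u = (if ts u = {} then (if u \<in> Vmax then -1 else 1)
      else if u \<in> Vmax then Max ((\<lambda>v'. lam (u, v') * d v') ` ts u)
      else Min ((\<lambda>v'. lam (u, v') * d v') ` ts u))" for d :: "'v \<Rightarrow> real" and u
  have tsE: "\<And>u v'. v' \<in> ts u \<Longrightarrow> (u, v') \<in> E" unfolding ts_def tight_def by auto
  have fin: "\<And>u. finite (ts u)" by simp
  have Gmax: "\<And>d u v'. u \<in> Vmax \<Longrightarrow> v' \<in> ts u \<Longrightarrow> lam (u, v') * d v' \<le> G d u"
    unfolding G_def using fin by (auto intro!: Max_ge)
  have Gmin: "\<And>d u v'. u \<notin> Vmax \<Longrightarrow> v' \<in> ts u \<Longrightarrow> G d u \<le> lam (u, v') * d v'"
    unfolding G_def using fin by (auto intro!: Min_le)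
  have Gat: "\<And>d u. ts u \<noteq> {} \<Longrightarrow> \<exists>v'\<in>ts u. G d u = lam (u, v') * d v'"
  proof -
    fix d u assume ne: "ts u \<noteq> {}"
    show "\<exists>v'\<in>ts u. G d u = lam (u, v') * d v'"
    proof (cases "u \<in> Vmax")
      case True
      have "Max ((\<lambda>v'. lam (u, v') * d v') ` ts u) \<in> (\<lambda>v'. lam (u, v') * d v') ` ts u"
        using fin ne by (intro Max_in) auto
      then obtain v' where "v' \<in> ts u" "Max ((\<lambda>v'. lam (u, v') * d v') ` ts u) = lam (u, v') * d v'" by blast
      thus ?thesis using True ne unfolding G_def by auto
    next
      case False
      have "Min ((\<lambda>v'. lam (u, v') * d v') ` ts u) \<in> (\<lambda>v'. lam (u, v') * d v') ` ts u"
        using fin ne by (intro Min_in) auto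
      then obtain v' where "v' \<in> ts u" "Min ((\<lambda>v'. lam (u, v') * d v') ` ts u) = lam (u, v') * d v'" by blast
      thus ?thesis using False ne unfolding G_def by auto
    qed
  qed
  have Gmono: "G d u \<le> G d' u" if le: "\<And>v. d v \<le> d' v" for d d' u
  proof (cases "ts u = {}")
    case True thus ?thesis unfolding G_def by simp
  next
    case False
    show ?thesis
    proof (cases "u \<in> Vmax")
      case True
      obtain v' where v': "v' \<in> ts u" "G d u = lam (u, v') * d v'" using Gat[OF False] by blast
      have "lam (u, v') * d v' \<le> lam (u, v') * d' v'"
        using lamE[OF tsE[OF v'(1)]] le by (intro mult_left_mono) auto
      also have "\<dots> \<le> G d' u" using Gmax[OF True v'(1)] .
      finally show ?thesis using v' by simp
    next
      case f: False
      obtain v' where v': "v' \<in> ts u" "G d' u = lam (u, v') * d' v'" using Gat[OF False] by blast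
      have "G d u \<le> lam (u, v') * d v'" using Gmin[OF f v'(1)] .
      also have "\<dots> \<le> lam (u, v') * d' v'"
        using lamE[OF tsE[OF v'(1)]] le by (intro mult_left_mono) auto
      finally show ?thesis using v' by simp
    qed
  qed
  have absle: "\<bar>lam e * d\<bar> \<le> 1" if "e \<in> E" "\<bar>d\<bar> \<le> 1" for e d
  proof -
    have "\<bar>lam e * d\<bar> = lam e * \<bar>d\<bar>" using lamE[OF that(1)] by (simp add: abs_mult)
    also have "\<dots> \<le> 1" using lamE[OF that(1)] that(2) by (intro mult_le_one) auto
    finally show ?thesis .
  qed
  have Gbox: "-1 \<le> G d u \<and> G d u \<le> 1" if b: "\<And>v. -1 \<le> d v \<and> d v \<le> 1" for d u
  proof (cases "ts u = {}")
    case True thus ?thesis unfolding G_def by simp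
  next
    case False
    obtain v' where v': "v' \<in> ts u" "G d u = lam (u, v') * d v'" using Gat[OF False] by blast
    have "\<bar>d v'\<bar> \<le> 1" using b[of v'] by auto
    hence "\<bar>lam (u, v') * d v'\<bar> \<le> 1" using absle tsE[OF v'(1)] by blast
    thus ?thesis using v'(2) by auto
  qed
  obtain \<delta> where box: "\<And>v. -1 \<le> \<delta> v \<and> \<delta> v \<le> 1" and fixd: "G \<delta> = \<delta>"
    using fixpoint_box[of G] Gmono Gbox by blast
  define \<sigma>' where "\<sigma>' u = (if ts u = {} then (SOME v'. (u, v') \<in> E')
      else (SOME v'. v' \<in> ts u \<and> \<delta> u = lam (u, v') * \<delta> v'))" for u
  have s'F: "\<sigma>' u \<in> ts u \<and> \<delta> u = lam (u, \<sigma>' u) * \<delta> (\<sigma>' u)" if ne: "ts u \<noteq> {}" for u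
  proof -
    let ?P = "\<lambda>v'. v' \<in> ts u \<and> \<delta> u = lam (u, v') * \<delta> v'"
    have ex: "\<exists>v'. ?P v'" using Gat[OF ne, of \<delta>] fixd by auto
    have "?P (SOME v'. ?P v')" using someI_ex[OF ex] .
    moreover have "\<sigma>' u = (SOME v'. ?P v')" using ne unfolding \<sigma>'_def by simp
    ultimately show ?thesis by simp
  qed
  have s'E': "(u, \<sigma>' u) \<in> E'" for u
  proof (cases "ts u = {}")
    case True
    let ?P = "\<lambda>v'. (u, v') \<in> E'"
    have "?P (SOME v'. ?P v')" using someI_ex[OF E'_out[of u]] .
    moreover have "\<sigma>' u = (SOME v'. ?P v')" using True unfolding \<sigma>'_def by simp
    ultimately show ?thesis by simp
  next
    case False
    hence "\<sigma>' u \<in> ts u" using s'F by blast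
    thus ?thesis using E'_lower unfolding ts_def by auto
  qed
  define D where "D e = (if fst e \<in> Vmax then \<delta> (fst e) - lam e * \<delta> (snd e)
      else lam e * \<delta> (snd e) - \<delta> (fst e))" for e
  have off_lin: "offset Vmax w lam (\<lambda>v. \<nu> v + t * \<delta> v) e = offset Vmax w lam \<nu> e + t * D e" for t e
    unfolding offset_def D_def by (simp add: algebra_simps)
  have Dtight: "D e \<ge> 0" if "e \<in> tight Vmax E w lam \<nu>" for e
  proof -
    obtain u v' where e: "e = (u, v')" by force
    have v': "v' \<in> ts u" using that e unfolding ts_def by auto
    have "G \<delta> u = \<delta> u" using fixd by simp
    thus ?thesis using Gmax[OF _ v', of \<delta>] Gmin[OF _ v', of \<delta>] e unfolding D_def by auto
  qed
  have Dbound: "D e \<ge> -2" if "e \<in> E" for e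
  proof -
    have "\<bar>lam e * \<delta> (snd e)\<bar> \<le> 1" using absle[OF that] box[of "snd e"] by auto
    thus ?thesis using box[of "fst e"] unfolding D_def by auto
  qed
  have DF: "D (u, \<sigma>' u) = 0" if "ts u \<noteq> {}" for u
    using s'F[OF that] unfolding D_def by auto
  have DN: "D (u, \<sigma>' u) < 0" if ne: "ts u = {}" for u
  proof -
    have inE: "(u, \<sigma>' u) \<in> E" using s'E' E'E by auto
    have "\<bar>lam (u, \<sigma>' u) * \<delta> (\<sigma>' u)\<bar> \<le> lam (u, \<sigma>' u)"
    proof -
      have "\<bar>\<delta> (\<sigma>' u)\<bar> \<le> 1" using box[of "\<sigma>' u"] by auto
      hence "lam (u, \<sigma>' u) * \<bar>\<delta> (\<sigma>' u)\<bar> \<le> lam (u, \<sigma>' u) * 1"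
        using lamE[OF inE] by (intro mult_left_mono) auto
      thus ?thesis using lamE[OF inE] by (simp add: abs_mult)
    qed
    moreover have "\<delta> u = G \<delta> u" using fixd by simp
    ultimately show ?thesis using ne lamE[OF inE] unfolding D_def G_def by auto
  qed
  have tv0: "ts v0 = {}" using v0 unfolding ts_def by auto
  have sumD0: "(\<Sum>v\<in>UNIV. D (v, \<sigma>' v)) < (\<Sum>v\<in>(UNIV::'v set). 0)"
  proof (rule sum_strict_mono_ex1[where g="\<lambda>v. 0"])
    show "\<forall>x\<in>UNIV. D (x, \<sigma>' x) \<le> 0" using DF DN by (metis less_le_not_le order_refl)
    show "\<exists>a\<in>UNIV. D (a, \<sigma>' a) < 0" using DN[OF tv0] by blast
  qed simp
  hence sumD: "(\<Sum>v\<in>UNIV. D (v, \<sigma>' v)) < 0" by simp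
  define NT where "NT = {e \<in> E. e \<notin> tight Vmax E w lam \<nu>}"
  define t where "t = Min (insert 1 ((\<lambda>e. offset Vmax w lam \<nu> e / 2) ` NT))"
  have NTpos: "offset Vmax w lam \<nu> e > 0" if "e \<in> NT" for e
  proof -
    have "e \<in> E" "offset Vmax w lam \<nu> e \<noteq> 0" using that unfolding NT_def tight_def by auto
    thus ?thesis using solvesoff[OF nusol, of e] by linarith
  qed
  have finNT: "finite NT" by simp
  have tpos: "t > 0" unfolding t_def using finNT NTpos by (auto simp: Min_gr_iff)
  have tle: "t \<le> offset Vmax w lam \<nu> e / 2" if "e \<in> NT" for e
  proof -
    have "offset Vmax w lam \<nu> e / 2 \<in> insert 1 ((\<lambda>e. offset Vmax w lam \<nu> e / 2) ` NT)"
      using that by blast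
    thus ?thesis unfolding t_def using finNT by (intro Min_le) auto
  qed
  define x where "x v = \<nu> v + t * \<delta> v" for v
  have xsol: "solves_H Vmax E w lam x"
    unfolding solves_H_def
  proof
    fix e assume eE: "e \<in> E"
    have "offset Vmax w lam x e \<ge> 0"
    proof (cases "e \<in> tight Vmax E w lam \<nu>")
      case True
      hence "offset Vmax w lam \<nu> e = 0" unfolding tight_def by auto
      thus ?thesis unfolding x_def off_lin using Dtight[OF True] tpos by simp
    next
      case False
      hence NT: "e \<in> NT" using eE unfolding NT_def by auto
      have "t * (-2) \<le> t * D e" using Dbound[OF eE] tpos by (intro mult_left_mono) auto
      thus ?thesis unfolding x_def off_lin using tle[OF NT] by simp
    qed
    thus "ineq Vmax w lam e x" using ineq_off by simp
  qed
  have stale_eq: "offset Vmax w lam \<nu> (v, \<sigma>' v) = offset Vmax w lam \<nu> (v, \<sigma> v)" for v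
    using s'E'[of v] E'_upper unfolding stale_def by auto
  have fx: "f_strat Vmax w lam \<sigma>' x = f_strat Vmax w lam \<sigma> \<nu> + t * (\<Sum>v\<in>UNIV. D (v, \<sigma>' v))"
    unfolding f_strat_def x_def off_lin by (simp add: sum.distrib sum_distrib_left stale_eq)
  have "t * (\<Sum>v\<in>UNIV. D (v, \<sigma>' v)) < 0" using sumD tpos by (simp add: mult_pos_neg)
  hence flt: "f_strat Vmax w lam \<sigma>' x < f_strat Vmax w lam \<sigma> \<nu>" using fx by simp
  have bdd: "bdd_below ((\<lambda>y. f_strat Vmax w lam \<sigma>' y) ` {y. solves_H Vmax E w lam y})"
  proof (rule bdd_belowI2[where m=0])
    fix y assume "y \<in> {y. solves_H Vmax E w lam y}"
    hence "solves_H Vmax E w lam y" by simp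
    thus "0 \<le> f_strat Vmax w lam \<sigma>' y" unfolding f_strat_def
      using solvesoff s'E' E'E by (intro sum_nonneg) blast
  qed
  have "(INF y\<in>{y. solves_H Vmax E w lam y}. f_strat Vmax w lam \<sigma>' y) \<le> f_strat Vmax w lam \<sigma>' x"
    using bdd xsol by (intro cINF_lower) auto
  also have "\<dots> < f_strat Vmax w lam \<sigma> \<nu>" by (rule flt)
  also have "\<dots> \<le> (INF y\<in>{y. solves_H Vmax E w lam y}. f_strat Vmax w lam \<sigma> y)"
    using nusol minimal by (intro cINF_greatest) auto
  finally have "better Vmax E w lam \<sigma>' \<sigma>" unfolding better_def .
  moreover have "joint_strategy E \<sigma>'" unfolding joint_strategy_def using s'E' E'E by auto
  ultimately show ?thesis using s'E' by blast
qed

end
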